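(* In the setting below, for every face $F$ of $\mathcal{P}_\lambda$, every edge of $\phi(F)$ lies on some positive path of $\Gamma_{\mathbf{k}}$ that is entirely contained in $\phi(F)$.
   Context: Let $\mathbf{k}=(k_1,\dots,k_s)$ be positive integers with sum $n$, $n_0=0$, $n_i=\sum_{j\le i}k_j$, and $\lambda=(\lambda_1,\dots,\lambda_n)$ real with $\lambda_1=\cdots=\lambda_{n_1}>\lambda_{n_1+1}=\cdots=\lambda_{n_2}>\cdots>\lambda_{n_{s-1}+1}=\cdots=\lambda_n$. Let $I=\{(i,j)\in\mathbb{Z}^2:i,j\ge1,i+j\le n\}$; $\mathcal{P}_\lambda=\{x=(x_{i,j})_{(i,j)\in I}: x_{i,j+1}\ge x_{i,j}\ge x_{i+1,j}\ \forall (i,j)\in I\}$ with $x_{i,n+1-i}:=\lambda_i$. $Q^+$ is the directed graph on $\mathbb{Z}_{\ge0}^2$ with edges $((i,j),(i,j+1))$, $((i,j),(i+1,j))$. Terminal vertices $T_{\mathbf{k}}=\{(n_\ell,n-n_\ell):0\le\ell\le s\}$; $\Gamma_{\mathbf{k}}$ is the induced subgraph of $Q^+$ on $\{(a,b):a\le c,b\le d\text{ for some }(c,d)\in T_{\mathbf{k}}\}$. A positive path is a shortest directed path in $\Gamma_{\mathbf{k}}$ from $(0,0)$ to a terminal vertex. For a face $F$ of $\mathcal{P}_\lambda$, $\phi(F)$ is the subgraph of $Q^+$ whose edges are: all $((0,i),(0,i+1))$ and $((i,0),(i+1,0))$, $0\le i\le n-1$; $((i-1,j),(i,j))$ for $(i,j)\in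 I$ whenever some $x\in F$ has $x_{i,j}<x_{i,j+1}$; $((i,j-1),(i,j))$ for $(i,j)\in I$ whenever some $x\in F$ has $x_{i,j}>x_{i+1,j}$; its vertices are the endpoints of these edges. *)

theory Defs
  imports Complex_Main
begin

definition psum :: "nat list \<Rightarrow> nat \<Rightarrow> nat" where
  "psum k l = sum_list (take l k)"

definition Iset :: "nat \<Rightarrow> (nat \<times> nat) set" where
  "Iset n = {(i, j). 1 \<le> i \<and> 1 \<le> j \<and> i + j \<le> n}"

definition xext :: "nat \<Rightarrow> (nat \<Rightarrow> real) \<Rightarrow> (nat \<times> nat \<Rightarrow> real) \<Rightarrow> nat \<times> nat \<Rightarrow> real" where
  "xext n lam x p = (if fst p + snd p = n + 1 then lam (fst p) else x p)"

(* The polytope P_lambda inside R^I; points are functions vanishing outside I *)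
definition Ppoly :: "nat \<Rightarrow> (nat \<Rightarrow> real) \<Rightarrow> (nat \<times> nat \<Rightarrow> real) set" where
  "Ppoly n lam = {x. (\<forall>p. p \<notin> Iset n \<longrightarrow> x p = 0) \<and>
     (\<forall>i j. (i, j) \<in> Iset n \<longrightarrow>
        xext n lam x (i, j + 1) \<ge> xext n lam x (i, j) \<and>
        xext n lam x (i, j) \<ge> xext n lam x (i + 1, j))}"

(* Faces of a convex set (library notion face_of, written out for the
   function space, which is not a real_vector instance in the library) *)
definition fclosed_segment :: "('a \<Rightarrow> real) \<Rightarrow> ('a \<Rightarrow> real) \<Rightarrow> ('a \<Rightarrow> real) set" where
  "fclosed_segment a b = {(\<lambda>p. (1 - u) * a p + u * b p) | u. 0 \<le> u \<and> u \<le> 1}"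

definition fopen_segment :: "('a \<Rightarrow> real) \<Rightarrow> ('a \<Rightarrow> real) \<Rightarrow> ('a \<Rightarrow> real) set" where
  "fopen_segment a b = fclosed_segment a b - {a, b}"

definition fconvex :: "('a \<Rightarrow> real) set \<Rightarrow> bool" where
  "fconvex S \<longleftrightarrow> (\<forall>x\<in>S. \<forall>y\<in>S. \<forall>u\<ge>0. \<forall>v\<ge>0. u + v = 1 \<longrightarrow> (\<lambda>p. u * x p + v * y p) \<in> S)"

definition fface_of :: "('a \<Rightarrow> real) set \<Rightarrow> ('a \<Rightarrow> real) set \<Rightarrow> bool" where
  "fface_of T S \<longleftrightarrow> T \<subseteq> S \<and> fconvex T \<and>
     (\<forall>a\<in>S. \<forall>b\<in>S. \<forall>x\<in>T. x \<in> fopen_segment a b \<longrightarrow> a \<in> T \<and> b \<in> T)"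

definition Qplus_edges :: "((nat \<times> nat) \<times> (nat \<times> nat)) set" where
  "Qplus_edges = {(v, w). w = (fst v, snd v + 1) \<or> w = (fst v + 1, snd v)}"

definition terminals :: "nat list \<Rightarrow> (nat \<times> nat) set" where
  "terminals k = {(psum k l, sum_list k - psum k l) | l. l \<le> length k}"

definition Gamma_verts :: "nat list \<Rightarrow> (nat \<times> nat) set" where
  "Gamma_verts k = {(a, b). \<exists>(c, d)\<in>terminals k. a \<le> c \<and> b \<le> d}"

definition Gamma_edges :: "nat list \<Rightarrow> ((nat \<times> nat) \<times> (nat \<times> nat)) set" where
  "Gamma_edges k = {(v, w) \<in> Qplus_edges. v \<in> Gamma_verts k \<and> w \<in> Gamma_verts k}"

definition is_dpath :: "('v \<times> 'v) set \<Rightarrow> 'v list \<Rightarrow> 'v \<Rightarrow> 'v \<Rightarrow> bool" where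
  "is_dpath E ps u v \<longleftrightarrow> ps \<noteq> [] \<and> hd ps = u \<and> last ps = v \<and>
     (\<forall>i. i + 1 < length ps \<longrightarrow> (ps ! i, ps ! (i + 1)) \<in> E)"

definition path_edges :: "'v list \<Rightarrow> ('v \<times> 'v) set" where
  "path_edges ps = set (zip ps (tl ps))"

definition positive_path :: "nat list \<Rightarrow> (nat \<times> nat) list \<Rightarrow> bool" where
  "positive_path k ps \<longleftrightarrow> (\<exists>t\<in>terminals k. is_dpath (Gamma_edges k) ps (0, 0) t \<and>
     (\<forall>qs. is_dpath (Gamma_edges k) qs (0, 0) t \<longrightarrow> length ps \<le> length qs))"

definition phi_edges :: "nat \<Rightarrow> (nat \<Rightarrow> real) \<Rightarrow> (nat \<times> nat \<Rightarrow> real) set \<Rightarrow>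
    ((nat \<times> nat) \<times> (nat \<times> nat)) set" where
  "phi_edges n lam F =
     {((0, i), (0, i + 1)) | i. i < n} \<union> {((i, 0), (i + 1, 0)) | i. i < n} \<union>
     {((i - 1, j), (i, j)) | i j. (i, j) \<in> Iset n \<and>
         (\<exists>x\<in>F. xext n lam x (i, j) < xext n lam x (i, j + 1))} \<union>
     {((i, j - 1), (i, j)) | i j. (i, j) \<in> Iset n \<and>
         (\<exists>x\<in>F. xext n lam x (i, j) > xext n lam x (i + 1, j))}"

end

theory Submission
  imports Defs
begin

lemma path_edges_simps[simp]:
  "path_edges [] = {}" "path_edges [a] = {}"
  "path_edges (a # b # xs) = insert (a, b) (path_edges (b # xs))"
  by (auto simp: path_edges_def)

lemma path_edges_append:
  "ps \<noteq> [] \<Longrightarrow> qs \<noteq> [] \<Longrightarrow>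
   path_edges (ps @ qs) = path_edges ps \<union> {(last ps, hd qs)} \<union> path_edges qs"
proof (induction ps rule: induct_list012)
  case 1 then show ?case by simp
next
  case (2 x) then show ?case by (cases qs) auto
next
  case (3 x y zs) then show ?case by auto
qed

lemma is_dpath_alt:
  "is_dpath E ps u v \<longleftrightarrow> ps \<noteq> [] \<and> hd ps = u \<and> last ps = v \<and> path_edges ps \<subseteq> E"
proof -
  have "path_edges ps = {(ps ! i, ps ! (i+1)) | i. i + 1 < length ps}"
    unfolding path_edges_def set_zip by (auto simp: nth_tl)
  then show ?thesis unfolding is_dpath_def by auto
qed

lemma qpath_length:
  "path_edges ps \<subseteq> Qplus_edges \<Longrightarrow> ps \<noteq> [] \<Longrightarrow>
   fst (last ps) + snd (last ps) + 1 = fst (hd ps) + snd (hd ps) + length ps"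
  by (induction ps rule: induct_list012) (auto simp: Qplus_edges_def)

lemma psum_le: "psum k l \<le> sum_list k"
proof -
  have "sum_list k = sum_list (take l k) + sum_list (drop l k)"
    by (metis append_take_drop_id sum_list_append)
  then show ?thesis by (simp add: psum_def)
qed

lemma gv_elim: "(c,d) \<in> Gamma_verts k \<Longrightarrow> \<exists>c' d'. (c',d') \<in> terminals k \<and> c \<le> c' \<and> d \<le> d'"
  unfolding Gamma_verts_def by auto
lemma gv_intro: "(c',d') \<in> terminals k \<Longrightarrow> a \<le> c' \<Longrightarrow> b \<le> d' \<Longrightarrow> (a,b) \<in> Gamma_verts k"
  unfolding Gamma_verts_def by auto

lemma lam_block:
  assumes lam_eq: "\<forall>l<length k. \<forall>a b. psum k l < a \<and> a \<le> b \<and> b \<le> psum k (l + 1)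
                   \<longrightarrow> lam a = lam b"
    and "1 \<le> a" "a \<le> b" "b \<le> sum_list k"
    and nb: "\<forall>l\<le>length k. \<not> (a \<le> psum k l \<and> psum k l < b)"
  shows "lam a = (lam b :: real)"
proof -
  define m where "m = (LEAST l. a \<le> psum k l)"
  have ex: "a \<le> psum k (length k)" using assms by (simp add: psum_def)
  have m1: "a \<le> psum k m" unfolding m_def by (rule LeastI[of "\<lambda>l. a \<le> psum k l", OF ex])
  have m2: "m \<le> length k" unfolding m_def by (rule Least_le[of "\<lambda>l. a \<le> psum k l", OF ex])
  have "m \<noteq> 0"
  proof
    assume "m = 0" with m1 assms(2) show False by (simp add: psum_def)
  qed
  then obtain l where l: "m = Suc l" by (cases m) auto
  have "\<not> a \<le> psum k l" using not_less_Least[of l "\<lambda>l. a \<le> psum k l"] l m_def by auto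
  moreover have "\<not> psum k m < b" using nb m1 m2 by auto
  ultimately have "psum k l < a" "b \<le> psum k (l+1)" using l by auto
  moreover have "l < length k" using l m2 by simp
  ultimately show ?thesis using lam_eq assms(3) by blast
qed

lemma ppoly_ineq:
  "x \<in> Ppoly n lam \<Longrightarrow> (i,j) \<in> Iset n \<Longrightarrow>
   xext n lam x (i,j) \<le> xext n lam x (i,j+1) \<and> xext n lam x (i+1,j) \<le> xext n lam x (i,j)"
  by (auto simp: Ppoly_def)

lemma upper:
  assumes "x \<in> Ppoly n lam"
  shows "1 \<le> i \<Longrightarrow> 1 \<le> j \<Longrightarrow> i + j \<le> n + 1 \<Longrightarrow> xext n lam x (i, j) \<le> lam i"
proof (induction "n + 1 - (i + j)" arbitrary: j)
  case 0
  then have "i + j = n + 1" by simp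
  then show ?case by (simp add: xext_def)
next
  case (Suc m)
  then have "(i,j) \<in> Iset n" by (auto simp: Iset_def)
  then have "xext n lam x (i, j) \<le> xext n lam x (i, j+1)" using ppoly_ineq[OF assms] by blast
  moreover have "xext n lam x (i, j+1) \<le> lam i" using Suc by auto
  ultimately show ?case by linarith
qed

lemma lower:
  assumes "x \<in> Ppoly n lam"
  shows "1 \<le> i \<Longrightarrow> 1 \<le> j \<Longrightarrow> i + j \<le> n + 1 \<Longrightarrow> lam (n + 1 - j) \<le> xext n lam x (i, j)"
proof (induction "n + 1 - (i + j)" arbitrary: i)
  case 0
  then have "i + j = n + 1" by simp
  then have "n + 1 - j = i" by simp
  then show ?case using \<open>i + j = n + 1\<close> by (simp add: xext_def)
next
  case (Suc m)
  then have "(i,j) \<in> Iset n" by (auto simp: Iset_def)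
  then have "xext n lam x (i+1, j) \<le> xext n lam x (i, j)" using ppoly_ineq[OF assms] by blast
  moreover have "lam (n + 1 - j) \<le> xext n lam x (i+1, j)" using Suc by auto
  ultimately show ?case by linarith
qed

lemma phi_iff:
  "((a,b),(c,d)) \<in> phi_edges n lam F \<longleftrightarrow>
   (a = 0 \<and> c = 0 \<and> d = b + 1 \<and> b < n) \<or> (b = 0 \<and> d = 0 \<and> c = a + 1 \<and> a < n) \<or>
   (c = a + 1 \<and> d = b \<and> (a+1, b) \<in> Iset n \<and> (\<exists>x\<in>F. xext n lam x (a+1, b) < xext n lam x (a+1, b + 1))) \<or>
   (c = a \<and> d = b + 1 \<and> (a, b+1) \<in> Iset n \<and> (\<exists>x\<in>F. xext n lam x (a, b+1) > xext n lam x (a + 1, b+1)))"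
  unfolding phi_edges_def
  apply (rule iffI)
   apply (elim UnE)
      apply blast
     apply blast
    apply (rule disjI2, rule disjI2, rule disjI1)
    apply (elim CollectE exE conjE)
    subgoal for i j
    proof -
      assume h: "((a, b), c, d) = ((i - 1, j), i, j)" "(i, j) \<in> Iset n"
        "\<exists>x\<in>F. xext n lam x (i, j) < xext n lam x (i, j + 1)"
      have "1 \<le> i" using h(2) by (simp add: Iset_def)
      then have "i = a + 1" "j = b" "c = i" "d = j" using h(1) by auto
      then show ?thesis using h by simp
    qed
   apply (rule disjI2, rule disjI2, rule disjI2)
   apply (elim CollectE exE conjE)
    subgoal for i j
    proof -
      assume h: "((a, b), c, d) = ((i, j - 1), i, j)" "(i, j) \<in> Iset n"
        "\<exists>x\<in>F. xext n lam x (i + 1, j) < xext n lam x (i, j)"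
      have "1 \<le> j" using h(2) by (simp add: Iset_def)
      then have "i = a" "j = b + 1" "c = i" "d = j" using h(1) by auto
      then show ?thesis using h by simp
    qed
  apply (elim disjE conjE)
     apply blast
    apply blast
   apply (rule UnI1, rule UnI2) apply (rule CollectI, rule exI[of _ "a+1"], rule exI[of _ b]) apply simp
  apply (rule UnI2) apply (rule CollectI, rule exI[of _ "a"], rule exI[of _ "b+1"]) apply simp
  done


theorem lemma2p3:
  fixes k :: "nat list" and n :: nat and lam :: "nat \<Rightarrow> real"
    and F :: "(nat \<times> nat \<Rightarrow> real) set"
  assumes kpos: "\<forall>a\<in>set k. 0 < a"
    and n_def: "n = sum_list k"
    and lam_eq: "\<forall>l<length k. \<forall>a b. psum k l < a \<and> a \<le> b \<and> b \<le> psum k (l + 1)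
                   \<longrightarrow> lam a = lam b"
    and lam_gt: "\<forall>l. 1 \<le> l \<and> l < length k \<longrightarrow> lam (psum k l) > lam (psum k l + 1)"
    and face: "fface_of F (Ppoly n lam)"
  shows "\<forall>e\<in>phi_edges n lam F. \<exists>ps. positive_path k ps \<and> e \<in> path_edges ps \<and>
           path_edges ps \<subseteq> phi_edges n lam F"
proof -
  let ?E = "phi_edges n lam F"
  let ?X = "xext n lam"
  have FP: "F \<subseteq> Ppoly n lam" using face by (simp add: fface_of_def)
  have ineq: "\<And>x i j. x \<in> F \<Longrightarrow> (i,j) \<in> Iset n \<Longrightarrow> ?X x (i,j) \<le> ?X x (i,j+1) \<and> ?X x (i+1,j) \<le> ?X x (i,j)"
    using FP ppoly_ineq by blast
  have gam: "(i,j) \<in> Gamma_verts k" if ij: "(i,j) \<in> Iset n" and lt: "lam (n+1-j) < lam i" for i j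
  proof (rule ccontr)
    assume ng: "(i,j) \<notin> Gamma_verts k"
    have "\<forall>l\<le>length k. \<not> (i \<le> psum k l \<and> psum k l < n+1-j)"
    proof (intro allI impI notI)
      fix l assume l: "l \<le> length k" "i \<le> psum k l \<and> psum k l < n+1-j"
      have "(psum k l, n - psum k l) \<in> terminals k" using l n_def unfolding terminals_def by blast
      moreover have "j \<le> n - psum k l" using l by linarith
      ultimately show False using ng l unfolding Gamma_verts_def by blast
    qed
    then have "lam i = lam (n+1-j)"
      using lam_block[OF lam_eq, of i "n+1-j"] ij n_def by (auto simp: Iset_def)
    then show False using lt by simp
  qed
  have headA: "(i,j) \<in> Gamma_verts k" if "x\<in>F" "(i,j) \<in> Iset n" "?X x (i,j) < ?X x (i,j+1)" for x i j
  proof -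
    have "?X x (i,j+1) \<le> lam i" using upper[of x n lam i "j+1"] that FP by (auto simp: Iset_def)
    moreover have "lam (n+1-j) \<le> ?X x (i,j)" using lower[of x n lam i j] that FP by (auto simp: Iset_def)
    ultimately show ?thesis using gam that by fastforce
  qed
  have headB: "(i,j) \<in> Gamma_verts k" if "x\<in>F" "(i,j) \<in> Iset n" "?X x (i+1,j) < ?X x (i,j)" for x i j
  proof -
    have "?X x (i,j) \<le> lam i" using upper[of x n lam i j] that FP by (auto simp: Iset_def)
    moreover have "lam (n+1-j) \<le> ?X x (i+1,j)" using lower[of x n lam "i+1" j] that FP by (auto simp: Iset_def)
    ultimately show ?thesis using gam that by fastforce
  qed
  have gdown: "(a,b) \<in> Gamma_verts k" if "(c,d) \<in> Gamma_verts k" "a \<le> c" "b \<le> d" for a b c d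
  proof -
    note g = that
    obtain c' d' where "(c',d') \<in> terminals k" "c \<le> c'" "d \<le> d'"
      using gv_elim[OF g(1)] by blast
    then show ?thesis using that gv_intro[of c' d' k a b] by simp
  qed
  have t0: "(0, n) \<in> terminals k" unfolding terminals_def
    by (rule CollectI, rule exI[of _ 0]) (simp add: psum_def n_def)
  have t1: "(n, 0) \<in> terminals k" unfolding terminals_def
    by (rule CollectI, rule exI[of _ "length k"]) (simp add: psum_def n_def)
  have g0: "\<And>b. b \<le> n \<Longrightarrow> (0,b) \<in> Gamma_verts k" using t0 gv_intro by blast
  have g1: "\<And>a. a \<le> n \<Longrightarrow> (a,0) \<in> Gamma_verts k" using t1 gv_intro by blast
  have EG: "(c,d) \<in> Gamma_verts k \<and> (a,b) \<in> Gamma_verts k \<and> c + d = a + b + 1"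
    if "((a,b),(c,d)) \<in> ?E" for a b c d
  proof -
    have "(c,d) \<in> Gamma_verts k"
      using that unfolding phi_iff using g0 g1 headA headB by auto
    moreover have "a \<le> c" "b \<le> d" "c + d = a + b + 1" using that unfolding phi_iff by auto
    ultimately show ?thesis using gdown by blast
  qed
  have EGam: "?E \<subseteq> Gamma_edges k"
  proof
    fix e assume e: "e \<in> ?E"
    obtain a b c d where ed: "e = ((a,b),(c,d))" by (metis prod.exhaust)
    have "(c,d) \<in> Gamma_verts k" "(a,b) \<in> Gamma_verts k" using EG e ed by auto
    have e': "((a,b),(c,d)) \<in> ?E" using e ed by simp
    moreover have "((a,b),(c,d)) \<in> Qplus_edges" using e' unfolding phi_iff Qplus_edges_def by auto
    ultimately show "e \<in> Gamma_edges k" using ed EG[OF e'] by (simp add: Gamma_edges_def)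
  qed
  have termv: "(a,b) \<in> terminals k" if "(a,b) \<in> Gamma_verts k" "n \<le> a + b" for a b
  proof -
    note tv = that
    obtain c d where cd: "(c,d) \<in> terminals k" "a \<le> c" "b \<le> d" using gv_elim[OF tv(1)] by blast
    then obtain l where "c = psum k l" "d = n - psum k l" by (auto simp: terminals_def n_def)
    moreover have "psum k l \<le> n" using psum_le n_def by simp
    ultimately have "a = c" "b = d" using cd tv(2) by linarith+
    then show ?thesis using cd by simp
  qed
  have bkw: "\<exists>u. (u,(a,b)) \<in> ?E" if hb: "((a,b),w) \<in> ?E" "(a,b) \<noteq> (0,0)" for a b w
  proof -
    obtain c d where w: "w = (c,d)" by (metis prod.exhaust)
    have gg: "(c,d) \<in> Gamma_verts k" "c + d = a + b + 1" using EG hb w by auto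
    obtain c' d' where cd': "(c',d') \<in> terminals k" "c \<le> c'" "d \<le> d'" using gv_elim[OF gg(1)] by blast
    then obtain l where "c' = psum k l" "d' = n - psum k l" by (auto simp: terminals_def n_def)
    then have "c + d \<le> n" using psum_le[of k l] n_def cd' by linarith
    show ?thesis
    proof (cases "a = 0 \<or> b = 0")
      case True
      then show ?thesis
      proof
        assume a0: "a = 0"
        then have "b \<noteq> 0" using hb by auto
        then have "((0, b-1), (a,b)) \<in> ?E" using a0 \<open>c + d \<le> n\<close> gg unfolding phi_iff by auto
        then show ?thesis by blast
      next
        assume b0: "b = 0"
        then have "a \<noteq> 0" using hb by auto
        then have "((a-1, 0), (a,b)) \<in> ?E" using b0 \<open>c + d \<le> n\<close> gg unfolding phi_iff by auto
        then show ?thesis by blast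
      qed
    next
      case False
      then have ab: "a \<ge> 1" "b \<ge> 1" by auto
      have I1: "(a,b) \<in> Iset n" "(a+1,b) \<in> Iset n" "(a,b+1) \<in> Iset n"
        using ab \<open>c + d \<le> n\<close> gg by (auto simp: Iset_def)
      obtain x where x: "x \<in> F" and
        xx: "?X x (a+1,b) < ?X x (a+1,b+1) \<or> ?X x (a+1,b+1) < ?X x (a,b+1)"
        using ab hb(1)[unfolded w phi_iff] by auto
      have i1: "?X x (a,b) \<le> ?X x (a,b+1)" "?X x (a+1,b) \<le> ?X x (a,b)"
        using ineq[OF x I1(1)] by auto
      have i2: "?X x (a+1,b) \<le> ?X x (a+1,b+1)" using ineq[OF x I1(2)] by auto
      have i3: "?X x (a+1,b+1) \<le> ?X x (a,b+1)" using ineq[OF x I1(3)] by auto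
      have "?X x (a,b) < ?X x (a,b+1) \<or> ?X x (a+1,b) < ?X x (a,b)"
        using xx i1 i2 i3 by linarith
      then have "((a-1,b),(a,b)) \<in> ?E \<or> ((a,b-1),(a,b)) \<in> ?E"
        using x ab I1(1) unfolding phi_iff by auto
      then show ?thesis by blast
    qed
  qed
  have fwd: "\<exists>w. ((a,b),w) \<in> ?E" if hf: "(v,(a,b)) \<in> ?E" "a + b < n" for a b v
  proof (cases "a = 0 \<or> b = 0")
    case True
    then show ?thesis
    proof
      assume "a = 0"
      then have "((a,b),(0,b+1)) \<in> ?E" using hf unfolding phi_iff by auto
      then show ?thesis by blast
    next
      assume "b = 0"
      then have "((a,b),(a+1,0)) \<in> ?E" using hf unfolding phi_iff by auto
      then show ?thesis by blast
    qed
  next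
    case False
    then have ab: "a \<ge> 1" "b \<ge> 1" by auto
    obtain a' b' where v: "v = (a',b')" by (metis prod.exhaust)
    have I1: "(a,b) \<in> Iset n" "(a+1,b) \<in> Iset n" "(a,b+1) \<in> Iset n"
      using ab hf by (auto simp: Iset_def)
    have "\<exists>x\<in>F. ?X x (a,b) < ?X x (a,b+1) \<or> ?X x (a+1,b) < ?X x (a,b)"
    proof -
      have "(a' = a - 1 \<and> (\<exists>x\<in>F. ?X x (a,b) < ?X x (a,b+1))) \<or>
            (b' = b - 1 \<and> (\<exists>x\<in>F. ?X x (a+1,b) < ?X x (a,b)))"
        using ab hf(1)[unfolded v phi_iff] by auto
      then show ?thesis by blast
    qed
    then obtain x where x: "x \<in> F" and
      xx: "?X x (a,b) < ?X x (a,b+1) \<or> ?X x (a+1,b) < ?X x (a,b)" by blast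
    have i1: "?X x (a,b) \<le> ?X x (a,b+1)" "?X x (a+1,b) \<le> ?X x (a,b)"
      using ineq[OF x I1(1)] by auto
    have i2: "?X x (a+1,b) \<le> ?X x (a+1,b+1)" using ineq[OF x I1(2)] by auto
    have i3: "?X x (a+1,b+1) \<le> ?X x (a,b+1)" using ineq[OF x I1(3)] by auto
    have "?X x (a+1,b) < ?X x (a+1,b+1) \<or> ?X x (a+1,b+1) < ?X x (a,b+1)"
      using xx i1 i2 i3 by linarith
    then have "((a,b),(a+1,b)) \<in> ?E \<or> ((a,b),(a,b+1)) \<in> ?E"
      using x I1 unfolding phi_iff by auto
    then show ?thesis by blast
  qed
  have bpath: "\<exists>ps. ps \<noteq> [] \<and> hd ps = (0,0) \<and> last ps = v \<and> path_edges ps \<subseteq> ?E"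
    if "fst v + snd v = m" "(v,w) \<in> ?E" for m v w
    using that
  proof (induction m arbitrary: v w)
    case 0
    then have "v = (0,0)" by (cases v) auto
    then show ?case by (intro exI[of _ "[v]"]) simp
  next
    case (Suc m)
    obtain a b where v: "v = (a,b)" by (metis prod.exhaust)
    have "v \<noteq> (0,0)" using Suc.prems by auto
    then obtain u where u: "(u,v) \<in> ?E" using bkw Suc.prems v by blast
    obtain c d where ud: "u = (c,d)" by (metis prod.exhaust)
    have "fst u + snd u = m" using EG[of c d a b] u ud v Suc.prems by auto
    then obtain ps where ps: "ps \<noteq> [] \<and> hd ps = (0,0) \<and> last ps = u \<and> path_edges ps \<subseteq> ?E"
      using Suc.IH u by blast
    show ?case
      by (rule exI[of _ "ps @ [v]"]) (use ps u in \<open>auto simp: path_edges_append\<close>)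
  qed
  have fpath: "\<exists>qs t. t \<in> terminals k \<and> qs \<noteq> [] \<and> hd qs = w \<and> last qs = t \<and> path_edges qs \<subseteq> ?E"
    if "n - (fst w + snd w) = m" "(v,w) \<in> ?E" for m v w
    using that
  proof (induction m arbitrary: v w)
    case 0
    obtain a b where w: "w = (a,b)" by (metis prod.exhaust)
    obtain c d where v: "v = (c,d)" by (metis prod.exhaust)
    have "w \<in> Gamma_verts k" using EG[of c d a b] 0 v w by auto
    then have "w \<in> terminals k" using termv 0 w by auto
    then show ?case by (intro exI[of _ "[w]"] exI[of _ w]) simp
  next
    case (Suc m)
    obtain a b where w: "w = (a,b)" by (metis prod.exhaust)
    then obtain w' where w': "(w,w') \<in> ?E" using fwd Suc.prems by fastforce
    obtain c d where w'd: "w' = (c,d)" by (metis prod.exhaust)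
    have "n - (fst w' + snd w') = m" using EG[of a b c d] w' w'd w Suc.prems by auto
    then obtain qs t where qs: "t \<in> terminals k \<and> qs \<noteq> [] \<and> hd qs = w' \<and> last qs = t \<and> path_edges qs \<subseteq> ?E"
      using Suc.IH w' by blast
    have pe: "path_edges (w # qs) = insert (w, hd qs) (path_edges qs)"
      using path_edges_append[of "[w]" qs] qs by simp
    show ?case
      by (rule exI[of _ "w # qs"], rule exI[of _ t]) (use qs w' pe in auto)
  qed
  show ?thesis
  proof
    fix e assume e: "e \<in> ?E"
    obtain v w where vw: "e = (v,w)" by (metis prod.exhaust)
    obtain ps where ps: "ps \<noteq> [] \<and> hd ps = (0,0) \<and> last ps = v \<and> path_edges ps \<subseteq> ?E"
      using bpath e vw by blast
    obtain qs t where qs: "t \<in> terminals k \<and> qs \<noteq> [] \<and> hd qs = w \<and> last qs = t \<and> path_edges qs \<subseteq> ?E"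
      using fpath e vw by blast
    let ?R = "ps @ qs"
    have PE: "path_edges ?R = path_edges ps \<union> {(v, w)} \<union> path_edges qs"
      using ps qs path_edges_append by auto
    have sub: "path_edges ?R \<subseteq> ?E" using PE ps qs e vw by auto
    have dp: "is_dpath (Gamma_edges k) ?R (0,0) t"
      unfolding is_dpath_alt using ps qs sub EGam by auto
    have GQ: "Gamma_edges k \<subseteq> Qplus_edges" by (auto simp: Gamma_edges_def)
    have lenR: "fst t + snd t + 1 = length ?R"
      using qpath_length[of ?R] dp GQ unfolding is_dpath_alt by auto
    have "positive_path k ?R"
      unfolding positive_path_def
    proof (intro bexI[of _ t] conjI allI impI)
      show "is_dpath (Gamma_edges k) ?R (0,0) t" by fact
      show "t \<in> terminals k" using qs by simp
      fix qs' assume "is_dpath (Gamma_edges k) qs' (0,0) t"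
      then have "fst t + snd t + 1 = length qs'"
        using qpath_length[of qs'] GQ unfolding is_dpath_alt by auto
      then show "length ?R \<le> length qs'" using lenR by simp
    qed
    then show "\<exists>ps. positive_path k ps \<and> e \<in> path_edges ps \<and> path_edges ps \<subseteq> ?E"
      using PE sub vw by blast
  qed
qed

end
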